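(* Let $d\geq 0$ and $0<i\leq d+1$ be integers such that $i$ divides $d+1$. Let $\Delta\in\mathcal{C}(i,d)$ with $f_j(\Delta)=f_j(S(i,d))$ for every $j$. Then $\Delta$ is isomorphic to $S(i,d)$.
   Context: All simplicial complexes are finite abstract simplicial complexes; $f_j(\Delta)$ denotes the number of $j$-dimensional faces of $\Delta$. A set $F$ of vertices is a missing face of $\Delta$ if $F\notin\Delta$ but every proper subset of $F$ is in $\Delta$; its dimension is $|F|-1$. $\mathcal{C}(i,d)$ denotes the family of $d$-dimensional simplicial complexes $\Delta$ with $\tilde H_d(\Delta;\mathbb{Z})\neq 0$ (reduced homology) and with no missing faces of dimension $>i$. For integers $d\geq 0$, $i>0$ with $d+1=qi+r$ ($q\geq 0$, $1\leq r\leq i$), $S(i,d)$ is the simplicial join of $q$ copies of $\partial\sigma^i$ and one copy of $\partial\sigma^r$ on pairwise disjoint vertex sets, where $\partial\sigma^k$ is the boundary complex of the $k$-simplex. *)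

theory Defs
  imports Main
begin

text \<open>Finite abstract simplicial complexes: finite families of finite vertex sets,
  closed under taking subsets (so the empty face, of dimension -1, belongs to every
  nonempty complex).\<close>

definition simplicial_complex :: "'a set set \<Rightarrow> bool" where
  "simplicial_complex K \<longleftrightarrow> finite K \<and> K \<noteq> {} \<and> (\<forall>F\<in>K. finite F) \<and>
     (\<forall>F\<in>K. \<forall>G. G \<subseteq> F \<longrightarrow> G \<in> K)"

definition vertices :: "'a set set \<Rightarrow> 'a set" where
  "vertices K = \<Union>K"

definition has_dim :: "'a set set \<Rightarrow> nat \<Rightarrow> bool" where
  "has_dim K d \<longleftrightarrow> (\<exists>F\<in>K. card F = d + 1) \<and> (\<forall>F\<in>K. card F \<le> d + 1)"

definition fvec :: "nat \<Rightarrow> 'a set set \<Rightarrow> nat" where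
  "fvec j K = card {F\<in>K. card F = j + 1}"

definition missing_face :: "'a set set \<Rightarrow> 'a set \<Rightarrow> bool" where
  "missing_face K F \<longleftrightarrow> finite F \<and> F \<notin> K \<and> (\<forall>G. G \<subset> F \<longrightarrow> G \<in> K)"

text \<open>Simplicial (augmented) boundary map with integer coefficients, orientation induced by
  the linear order on vertices: the boundary of the oriented simplex [x_0 < ... < x_k] is
  the sum over l of (-1)^l [.. omitting x_l ..]. For G a (k-1)-face, the coefficient of F
  in the boundary is nonzero only if G is F minus one vertex x, and then equals
  (-1)^(number of vertices of F below x).\<close>
definition bd_sign :: "'a::linorder set \<Rightarrow> 'a set \<Rightarrow> int" where
  "bd_sign F G = (-1) ^ card {y\<in>F. y < the_elem (F - G)}"

definition boundary :: "'a::linorder set set \<Rightarrow> nat \<Rightarrow> ('a set \<Rightarrow> int) \<Rightarrow> 'a set \<Rightarrow> int" where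
  "boundary K k c G = (\<Sum>F\<in>{F\<in>K. card F = k + 1 \<and> G \<subseteq> F}. bd_sign F G * c F)"

definition chain :: "'a set set \<Rightarrow> nat \<Rightarrow> ('a set \<Rightarrow> int) \<Rightarrow> bool" where
  "chain K k c \<longleftrightarrow> (\<forall>F. c F \<noteq> 0 \<longrightarrow> F \<in> K \<and> card F = k + 1)"

text \<open>For a d-dimensional complex there are no (d+1)-chains, so the reduced homology
  group H~_d(K;Z) is the kernel of the (augmented, for d = 0) boundary map on d-chains.\<close>
definition top_reduced_homology_nonzero :: "'a::linorder set set \<Rightarrow> nat \<Rightarrow> bool" where
  "top_reduced_homology_nonzero K d \<longleftrightarrow>
     (\<exists>c. chain K d c \<and> (\<exists>F. c F \<noteq> 0) \<and>
          (\<forall>G\<in>K. card G = d \<longrightarrow> boundary K d c G = 0))"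

definition C_class :: "nat \<Rightarrow> nat \<Rightarrow> 'a::linorder set set set" where
  "C_class i d = {K. simplicial_complex K \<and> has_dim K d \<and> top_reduced_homology_nonzero K d \<and>
       (\<forall>F. missing_face K F \<longrightarrow> card F - 1 \<le> i)}"

definition bd_simplex :: "'a set \<Rightarrow> 'a set set" where
  "bd_simplex V = {F. F \<subset> V}"

definition join :: "'a set set \<Rightarrow> 'a set set \<Rightarrow> 'a set set" where
  "join K L = {F \<union> G | F G. F \<in> K \<and> G \<in> L}"

text \<open>S(i,d): with d+1 = q*i + r, 1 \<le> r \<le> i (so q = d div i, r = d mod i + 1), the join
  of q copies of the boundary of the i-simplex and one copy of the boundary of the
  r-simplex, on pairwise disjoint vertex sets of natural numbers.\<close>
definition S_complex :: "nat \<Rightarrow> nat \<Rightarrow> nat set set" where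
  "S_complex i d =
    (let q = d div i; r = d mod i + 1 in
     foldr join (map (\<lambda>k. bd_simplex {k * (i + 1) ..< (k + 1) * (i + 1)}) [0..<q])
       (bd_simplex {q * (i + 1) ..< q * (i + 1) + r + 1}))"

definition isomorphic :: "'a set set \<Rightarrow> 'b set set \<Rightarrow> bool" where
  "isomorphic K L \<longleftrightarrow> (\<exists>f. bij_betw f (vertices K) (vertices L) \<and> (`) f ` K = L)"

end

theory Submission imports Defs begin

definition SP :: "'a set set \<Rightarrow> 'a set set" where
  "SP P = {G. G \<subseteq> \<Union>P \<and> (\<forall>B\<in>P. \<not> B \<subseteq> G)}"

definition partn :: "'a set set \<Rightarrow> nat \<Rightarrow> nat \<Rightarrow> bool" where
  "partn P n i \<longleftrightarrow> finite P \<and> card P = n \<and> (\<forall>B\<in>P. finite B \<and> card B = Suc i) \<and>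
     (\<forall>B\<in>P. \<forall>C\<in>P. B \<noteq> C \<longrightarrow> B \<inter> C = {})"

definition lk :: "'a set set \<Rightarrow> 'a set \<Rightarrow> 'a set set" where
  "lk K A = {G. G \<inter> A = {} \<and> G \<union> A \<in> K}"

definition MF :: "'a set set \<Rightarrow> nat \<Rightarrow> bool" where
  "MF K i \<longleftrightarrow> (\<forall>X. finite X \<longrightarrow> X \<notin> K \<longrightarrow> (\<exists>M\<subseteq>X. M \<notin> K \<and> card M \<le> Suc i))"

definition dc :: "'a set set \<Rightarrow> bool" where
  "dc K \<longleftrightarrow> (\<forall>F\<in>K. \<forall>G. G \<subseteq> F \<longrightarrow> G \<in> K)"

definition good :: "'a set set \<Rightarrow> 'a set set \<Rightarrow> nat \<Rightarrow> nat \<Rightarrow> bool" where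
  "good K Fs i n \<longleftrightarrow> dc K \<and> (\<forall>F\<in>K. finite F \<and> card F \<le> n*i) \<and> finite (\<Union>K) \<and>
     card (\<Union>K) \<le> n * Suc i \<and> MF K i \<and> Fs \<noteq> {} \<and> Fs \<subseteq> K \<and> (\<forall>F\<in>Fs. card F = n*i) \<and>
     (\<forall>F\<in>Fs. \<forall>a\<in>F. \<exists>w. w \<notin> F \<and> insert w (F - {a}) \<in> Fs)"

lemma partn_card:
  assumes "partn P n i" shows "card (\<Union>P) = n * Suc i" "finite (\<Union>P)"
proof -
  have pw: "pairwise disjnt P" using assms unfolding partn_def pairwise_def disjnt_def by blast
  have "card (\<Union>P) = sum card P" by (rule card_Union_disjoint[OF pw]) (use assms in \<open>auto simp: partn_def\<close>)
  also have "\<dots> = sum (\<lambda>_. Suc i) P" using assms by (auto simp: partn_def intro: sum.cong)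
  also have "\<dots> = n * Suc i" using assms by (simp add: partn_def)
  finally show "card (\<Union>P) = n * Suc i" .
  show "finite (\<Union>P)" using assms by (auto simp: partn_def)
qed

lemma Union_SP: assumes "partn P n i" "0 < i" shows "\<Union>(SP P) = \<Union>P"
proof
  show "\<Union>(SP P) \<subseteq> \<Union>P" by (auto simp: SP_def)
  show "\<Union>P \<subseteq> \<Union>(SP P)"
  proof
    fix x assume x: "x \<in> \<Union>P"
    have "{x} \<in> SP P"
    proof -
      have "\<not> B \<subseteq> {x}" if "B \<in> P" for B
      proof
        assume "B \<subseteq> {x}"
        then have "card B \<le> 1" using card_mono[of "{x}" B] by simp
        with that assms show False by (auto simp: partn_def)
      qed
      with x show ?thesis by (auto simp: SP_def)
    qed
    then show "x \<in> \<Union>(SP P)" by blast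
  qed
qed

lemma MFD: "MF K i \<Longrightarrow> finite X \<Longrightarrow> X \<notin> K \<Longrightarrow> \<exists>M\<subseteq>X. M \<notin> K \<and> card M \<le> Suc i"
  unfolding MF_def by blast

lemma dcD: "dc K \<Longrightarrow> F \<in> K \<Longrightarrow> G \<subseteq> F \<Longrightarrow> G \<in> K"
  unfolding dc_def by blast

lemma dc_SP: "dc (SP P)" by (auto simp: dc_def SP_def)

lemma superset_card:
  assumes "finite F" "X \<subseteq> F" "card X \<le> k" "k \<le> card F"
  obtains A where "X \<subseteq> A" "A \<subseteq> F" "card A = k"
proof -
  have fx: "finite X" using assms finite_subset by blast
  have "k - card X \<le> card (F - X)" using assms by (simp add: card_Diff_subset fx)
  then obtain B where B: "B \<subseteq> F - X" "card B = k - card X" "finite B" by (rule obtain_subset_with_card_n)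
  have "card (X \<union> B) = card X + card B" using B fx by (intro card_Un_disjoint) auto
  then have "card (X \<union> B) = k" using B assms by simp
  with B assms show ?thesis by (intro that[of "X \<union> B"]) auto
qed

lemma link_good:
  assumes g: "good K Fs i (Suc m)" and F0: "F0 \<in> Fs" "A \<subseteq> F0" and cA: "card A = i"
    and x: "x \<in> \<Union>K" "x \<notin> A" "insert x A \<notin> K"
  shows "good (lk K A) ((\<lambda>F. F - A) ` {F\<in>Fs. A \<subseteq> F}) i m"
    and "\<Union>(lk K A) \<subseteq> \<Union>K - insert x A"
proof -
  have dcK: "dc K" and fK: "\<forall>F\<in>K. finite F \<and> card F \<le> Suc m * i" and fU: "finite (\<Union>K)"
    and cU: "card (\<Union>K) \<le> Suc m * Suc i" and mf: "MF K i" and FsK: "Fs \<subseteq> K"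
    and cFs: "\<forall>F\<in>Fs. card F = Suc m * i"
    and ex: "\<forall>F\<in>Fs. \<forall>a\<in>F. \<exists>w. w \<notin> F \<and> insert w (F - {a}) \<in> Fs"
    using g by (auto simp: good_def)
  have F0K: "F0 \<in> K" using F0 FsK by auto
  have finA: "finite A" using fK F0K F0 finite_subset by blast
  have AK: "A \<in> K" using dcD[OF dcK F0K F0(2)] .
  show sub: "\<Union>(lk K A) \<subseteq> \<Union>K - insert x A"
  proof
    fix y assume "y \<in> \<Union>(lk K A)"
    then obtain G where G: "y \<in> G" "G \<inter> A = {}" "G \<union> A \<in> K" by (auto simp: lk_def)
    have "insert y A \<subseteq> G \<union> A" using G by auto
    then have "insert y A \<in> K" using dcD[OF dcK G(3)] by blast
    then show "y \<in> \<Union>K - insert x A" using G x by auto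
  qed
  have dcL: "dc (lk K A)" unfolding dc_def lk_def
  proof (intro ballI allI impI)
    fix F G assume "F \<in> {G. G \<inter> A = {} \<and> G \<union> A \<in> K}" "G \<subseteq> F"
    then have "G \<inter> A = {}" "G \<union> A \<subseteq> F \<union> A" "F \<union> A \<in> K" by auto
    then show "G \<in> {G. G \<inter> A = {} \<and> G \<union> A \<in> K}" using dcD[OF dcK] by blast
  qed
  have fL: "\<forall>G\<in>lk K A. finite G \<and> card G \<le> m * i"
  proof
    fix G assume "G \<in> lk K A"
    then have G: "G \<inter> A = {}" "G \<union> A \<in> K" by (auto simp: lk_def)
    then have fGA: "finite (G \<union> A)" "card (G \<union> A) \<le> Suc m * i" using fK by auto
    then have fG: "finite G" by auto
    have "card (G \<union> A) = card G + i" using card_Un_disjoint[OF fG finA G(1)] cA by simp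
    then show "finite G \<and> card G \<le> m * i" using fG fGA by simp
  qed
  have finL: "finite (\<Union>(lk K A))" using sub fU finite_subset by blast
  have "card (\<Union>(lk K A)) \<le> card (\<Union>K - insert x A)" using sub fU by (intro card_mono) auto
  also have "\<dots> = card (\<Union>K) - Suc i"
  proof -
    have "insert x A \<subseteq> \<Union>K" using x F0K F0 by auto
    then show ?thesis using card_Diff_subset[of "insert x A" "\<Union>K"] finA x cA by simp
  qed
  also have "\<dots> \<le> m * Suc i" using cU by simp
  finally have cL: "card (\<Union>(lk K A)) \<le> m * Suc i" .
  have mfL: "MF (lk K A) i" unfolding MF_def
  proof (intro allI impI)
    fix X assume fX: "finite X" and X: "X \<notin> lk K A"
    show "\<exists>M\<subseteq>X. M \<notin> lk K A \<and> card M \<le> Suc i"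
    proof (cases "X \<inter> A = {}")
      case False
      then obtain y where "y \<in> X" "y \<in> A" by auto
      then show ?thesis by (intro exI[of _ "{y}"]) (auto simp: lk_def)
    next
      case True
      then have "X \<union> A \<notin> K" using X by (auto simp: lk_def)
      then obtain M where M: "M \<subseteq> X \<union> A" "M \<notin> K" "card M \<le> Suc i"
        using MFD[OF mf finite_UnI[OF fX finA]] by blast
      have fM: "finite M" using M fX finA finite_subset by blast
      have "M - A \<notin> lk K A"
      proof
        assume "M - A \<in> lk K A"
        then have "(M - A) \<union> A \<in> K" by (auto simp: lk_def)
        moreover have "M \<subseteq> (M - A) \<union> A" by auto
        ultimately have "M \<in> K" using dcD[OF dcK] by blast
        with M show False by simp
      qed
      moreover have "card (M - A) \<le> Suc i" using M fM card_mono[of M "M - A"] by auto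
      ultimately show ?thesis using M by (intro exI[of _ "M - A"]) auto
    qed
  qed
  let ?Fs = "(\<lambda>F. F - A) ` {F\<in>Fs. A \<subseteq> F}"
  have ne: "?Fs \<noteq> {}" using F0 by auto
  have FsL: "?Fs \<subseteq> lk K A"
  proof
    fix G assume "G \<in> ?Fs"
    then obtain F where "F \<in> Fs" "A \<subseteq> F" "G = F - A" by auto
    then show "G \<in> lk K A" using FsK by (auto simp: lk_def Un_absorb2)
  qed
  have cFsL: "\<forall>G\<in>?Fs. card G = m * i"
  proof
    fix G assume "G \<in> ?Fs"
    then obtain F where F: "F \<in> Fs" "A \<subseteq> F" "G = F - A" by auto
    have "finite F" using F FsK fK by auto
    then show "card G = m * i" using F cFs cA card_Diff_subset[OF finite_subset[OF F(2)] F(2)] by auto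
  qed
  have exL: "\<forall>G\<in>?Fs. \<forall>a\<in>G. \<exists>w. w \<notin> G \<and> insert w (G - {a}) \<in> ?Fs"
  proof (intro ballI)
    fix G a assume "G \<in> ?Fs" "a \<in> G"
    then obtain F where F: "F \<in> Fs" "A \<subseteq> F" "G = F - A" "a \<in> F" "a \<notin> A" by auto
    then obtain w where w: "w \<notin> F" "insert w (F - {a}) \<in> Fs" using ex by blast
    have "A \<subseteq> insert w (F - {a})" using F by auto
    moreover have "insert w (G - {a}) = insert w (F - {a}) - A" using F w by auto
    ultimately have "insert w (G - {a}) \<in> ?Fs"
      using w(2) by (intro image_eqI[where x="insert w (F - {a})"]) auto
    then show "\<exists>w. w \<notin> G \<and> insert w (G - {a}) \<in> ?Fs" using w F by (intro exI[of _ w]) auto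
  qed
  show "good (lk K A) ?Fs i m" unfolding good_def
    using dcL fL finL cL mfL ne FsL cFsL exL by blast
qed

lemma block_nonface:
  assumes dcK: "dc K" and dimK: "\<forall>F\<in>K. finite F \<and> card F \<le> Suc m * i" and mf: "MF K i"
    and i: "0 < i" and A: "finite A" "card A = i"
    and L: "lk K A = SP Q" and Q: "partn Q m i"
    and G: "G \<in> lk K A" "card G = m * i" and C: "C \<in> Q"
  shows "C \<notin> K"
proof
  assume CK: "C \<in> K"
  have UQ: "\<Union>Q = \<Union>(lk K A)" using Union_SP[OF Q i] L by simp
  have UA: "\<Union>Q \<inter> A = {}" unfolding UQ by (auto simp: lk_def)
  have GS: "G \<in> SP Q" using G L by simp
  have GU: "G \<subseteq> \<Union>Q" using GS by (auto simp: SP_def)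
  have fC: "finite C" "card C = Suc i" using Q C by (auto simp: partn_def)
  have fG: "finite G" using GU partn_card(2)[OF Q] finite_subset by blast
  have CG: "\<not> C \<subseteq> G" using GS C by (auto simp: SP_def)
  then obtain y where y: "y \<in> C" "y \<notin> G" by auto
  have "card (insert y G) \<le> card (C \<union> G)" using y fC fG by (intro card_mono) auto
  then have cCG: "m * i + 1 \<le> card (C \<union> G)" using y fG G by simp
  have CA: "C \<inter> A = {}" using UA C by auto
  have GA: "G \<inter> A = {}" using G by (auto simp: lk_def)
  let ?H = "A \<union> (C \<union> G)"
  have fH: "finite ?H" using A fC fG by simp
  have "card ?H = card A + card (C \<union> G)" using A fC fG CA GA by (intro card_Un_disjoint) auto
  then have "card ?H > Suc m * i" using cCG A by simp
  then have HK: "?H \<notin> K"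
  proof -
    assume c: "card ?H > Suc m * i"
    show "?H \<notin> K"
    proof
      assume "?H \<in> K"
      then have "card ?H \<le> Suc m * i" using bspec[OF dimK] by blast
      then show False using c by simp
    qed
  qed
  obtain M where M: "M \<subseteq> ?H" "M \<notin> K" "card M \<le> Suc i" using MFD[OF mf fH HK] by blast
  have fM: "finite M" using M fH finite_subset by blast
  show False
  proof (cases "C \<subseteq> M")
    case True
    then have "C = M" using card_subset_eq[OF fM True] fC M card_mono[OF fM True] by simp
    then show False using CK M by simp
  next
    case False
    have "M \<inter> \<Union>Q \<in> SP Q"
    proof -
      have "\<not> D \<subseteq> M \<inter> \<Union>Q" if D: "D \<in> Q" for D
      proof
        assume DM: "D \<subseteq> M \<inter> \<Union>Q"
        show False
        proof (cases "D = C")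
          case True then show False using DM False by auto
        next
          case False
          then have "D \<inter> C = {}" using Q D C unfolding partn_def by blast
          moreover have "D \<inter> A = {}" using UA D by auto
          ultimately have "D \<subseteq> G" using DM M by auto
          then show False using GS D by (auto simp: SP_def)
        qed
      qed
      then show ?thesis by (auto simp: SP_def)
    qed
    then have "M \<inter> \<Union>Q \<in> lk K A" using L by simp
    then have "(M \<inter> \<Union>Q) \<union> A \<in> K" by (auto simp: lk_def)
    moreover have "M \<subseteq> (M \<inter> \<Union>Q) \<union> A" using M GU C by auto
    ultimately have "M \<in> K" using dcD[OF dcK] by blast
    then show False using M by simp
  qed
qed


lemma main:
  assumes "0 < i" "good K Fs i n"
  shows "\<exists>P. partn P n i \<and> \<Union>P = \<Union>K \<and> K = SP P"
  using assms(2)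
proof (induction n arbitrary: K Fs)
  case 0
  then have dcK: "dc K" and fK: "\<forall>F\<in>K. finite F \<and> card F \<le> 0" and ne: "Fs \<noteq> {}"
    and FsK: "Fs \<subseteq> K" by (auto simp: good_def)
  then obtain F where "F \<in> K" by blast
  then have "{} \<in> K" using dcD[OF dcK] by blast
  moreover have "G = {}" if "G \<in> K" for G using fK that by auto
  ultimately have K: "K = {{}}" by blast
  show ?case by (rule exI[of _ "{}"]) (auto simp: K partn_def SP_def)
next
  case (Suc m)
  note g = Suc.prems
  have i: "0 < i" by fact
  have dcK: "dc K" and fK: "\<forall>F\<in>K. finite F \<and> card F \<le> Suc m * i" and fU: "finite (\<Union>K)"
    and cU: "card (\<Union>K) \<le> Suc m * Suc i" and mf: "MF K i" and FsK: "Fs \<subseteq> K"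
    and cFs: "\<forall>F\<in>Fs. card F = Suc m * i" and ne: "Fs \<noteq> {}"
    and ex: "\<forall>F\<in>Fs. \<forall>a\<in>F. \<exists>w. w \<notin> F \<and> insert w (F - {a}) \<in> Fs"
    using g by (auto simp: good_def)
  define V where "V = \<Union>K"
  obtain F where F: "F \<in> Fs" using ne by blast
  have FK: "F \<in> K" using F FsK by auto
  have finF: "finite F" using FK fK by auto
  have cF: "card F = Suc m * i" using F cFs by auto
  then have "F \<noteq> {}" using i by auto
  then obtain a where a: "a \<in> F" by blast
  obtain w where w: "w \<notin> F" "insert w (F - {a}) \<in> Fs" using ex F a by blast
  have "card (insert w F) = Suc m * i + 1" using w finF cF by simp
  then have wF: "insert w F \<notin> K" using bspec[OF fK] by fastforce
  obtain M where M: "M \<subseteq> insert w F" "M \<notin> K" "card M \<le> Suc i"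
    using MFD[OF mf _ wF] finF by blast
  have wM: "w \<in> M"
  proof (rule ccontr)
    assume "w \<notin> M" then have "M \<subseteq> F" using M by auto
    then show False using dcD[OF dcK FK] M by blast
  qed
  have aM: "a \<in> M"
  proof (rule ccontr)
    assume "a \<notin> M" then have "M \<subseteq> insert w (F - {a})" using M by auto
    then show False using dcD[OF dcK] M w FsK by blast
  qed
  have fM: "finite M" using M finF finite_subset by blast
  have "card (M - {w}) \<le> i" using M wM fM by simp
  moreover have "i \<le> card F" using cF by simp
  ultimately obtain A where A: "M - {w} \<subseteq> A" "A \<subseteq> F" "card A = i"
    using superset_card[OF finF, of "M - {w}" i] M w by blast
  have finA: "finite A" using A finF finite_subset by blast
  have wA: "w \<notin> A" using A w by auto
  have aA: "a \<in> A" using A aM wM w a by auto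
  have wAK: "insert w A \<notin> K"
  proof
    assume "insert w A \<in> K"
    moreover have "M \<subseteq> insert w A" using A by auto
    ultimately show False using dcD[OF dcK] M by blast
  qed
  have AK: "A \<in> K" using dcD[OF dcK FK A(2)] .
  have wV: "w \<in> \<Union>K" using w FsK by auto
  let ?L = "lk K A"
  have gL: "good ?L ((\<lambda>F. F - A) ` {F\<in>Fs. A \<subseteq> F}) i m"
    and subL: "\<Union>?L \<subseteq> \<Union>K - insert w A"
    using link_good[OF g F A(2) A(3) wV wA wAK] by auto
  obtain Q where Q: "partn Q m i" "\<Union>Q = \<Union>?L" "?L = SP Q" using Suc.IH[OF gL] by blast
  define U where "U = \<Union>Q"
  have cUQ: "card U = m * Suc i" "finite U" using partn_card[OF Q(1)] U_def by auto
  have UV: "U \<subseteq> V - insert w A" using subL Q(2) U_def V_def by auto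
  have AV: "insert w A \<subseteq> V" using wV AK V_def by auto
  have VU: "V = insert w A \<union> U"
  proof -
    have "insert w A \<union> U \<subseteq> V" using UV AV by auto
    moreover have "card (insert w A \<union> U) = Suc i + m * Suc i"
    proof -
      have "insert w A \<inter> U = {}" using UV by auto
      then have "card (insert w A \<union> U) = card (insert w A) + card U"
        using finA cUQ by (intro card_Un_disjoint) auto
      then show ?thesis using finA wA A(3) cUQ by simp
    qed
    moreover have "card V \<le> Suc m * Suc i" using cU V_def by simp
    moreover have "finite V" using fU V_def by simp
    ultimately show ?thesis using card_subset_eq[of V "insert w A \<union> U"] card_mono[of V "insert w A \<union> U"]
      by (metis add.commute le_antisym mult_Suc)
  qed
  have dimL: "\<forall>G\<in>?L. card G \<le> m * i"
  proof
    fix G assume "G \<in> ?L"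
    moreover have "\<forall>F\<in>?L. finite F \<and> card F \<le> m * i" using gL unfolding good_def by (elim conjE) assumption
    ultimately show "card G \<le> m * i" by blast
  qed
  have FA: "F - A \<in> ?L" "card (F - A) = m * i"
  proof -
    have "(F - A) \<union> A = F" using A(2) by blast
    then show "F - A \<in> ?L" using FK unfolding lk_def by auto
    show "card (F - A) = m * i" using card_Diff_subset[OF finA A(2)] cF A(3) by simp
  qed
  have nbQ: "\<forall>C\<in>Q. C \<notin> K"
    using block_nonface[OF dcK fK mf i finA A(3) Q(3) Q(1) FA] by blast
  have key: "insert w (A - {a0}) \<union> G2 \<in> K" if a0: "a0 \<in> A" and G2: "G2 \<in> SP Q" for a0 G2
  proof -
    have a0F: "a0 \<in> F" using a0 A by auto
    obtain w0 where w0: "w0 \<notin> F" "insert w0 (F - {a0}) \<in> Fs" using ex F a0F by blast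
    have w0V: "w0 \<in> V" using w0 FsK V_def by auto
    have w0w: "w0 = w"
    proof (rule ccontr)
      assume "w0 \<noteq> w"
      moreover have "w0 \<notin> A" using w0 A(2) by blast
      ultimately have w0U: "w0 \<in> U" using w0V VU by blast
      have "F - A \<subseteq> \<Union>?L" using FA(1) by blast
      then have "F - A \<subseteq> U" using Q(2) U_def by simp
      have "insert w0 (F - A) \<notin> ?L"
      proof
        assume "insert w0 (F - A) \<in> ?L"
        then have "card (insert w0 (F - A)) \<le> m * i" using dimL by blast
        moreover have "card (insert w0 (F - A)) = Suc (m * i)" using FA finF w0 by simp
        ultimately show False by simp
      qed
      moreover have "insert w0 (F - A) \<subseteq> \<Union>Q" using \<open>F - A \<subseteq> U\<close> w0U U_def by auto
      ultimately have "insert w0 (F - A) \<notin> SP Q" using Q(3) by metis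
      then obtain D where D: "D \<in> Q" "D \<subseteq> insert w0 (F - A)"
        using \<open>insert w0 (F - A) \<subseteq> \<Union>Q\<close> unfolding SP_def by blast
      have "insert w0 (F - A) \<subseteq> insert w0 (F - {a0})" using a0 by auto
      moreover have "insert w0 (F - {a0}) \<in> K" using w0(2) FsK by blast
      ultimately have "D \<subseteq> insert w0 (F - {a0})" "insert w0 (F - {a0}) \<in> K" using D(2) by blast+
      then have "D \<in> K" using dcD[OF dcK] by blast
      then show False using nbQ D by blast
    qed
    define A' where "A' = insert w (A - {a0})"
    have A'F: "A' \<subseteq> insert w0 (F - {a0})" using A w0w A'_def by auto
    have cA': "card A' = i" using A'_def wA a0 finA A(3) i by (simp add: card_Diff_singleton)
    have a0A': "a0 \<notin> A'" using A'_def a0 wA by auto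
    have a0V: "a0 \<in> \<Union>K" using a0F FK by auto
    have iA': "insert a0 A' = insert w A" using A'_def a0 by auto
    have a0K: "insert a0 A' \<notin> K" using iA' wAK by simp
    have gL': "good (lk K A') ((\<lambda>F. F - A') ` {F\<in>Fs. A' \<subseteq> F}) i m"
      and subL': "\<Union>(lk K A') \<subseteq> \<Union>K - insert a0 A'"
      using link_good[OF g w0(2) A'F cA' a0V a0A' a0K] by auto
    obtain Q' where Q': "partn Q' m i" "\<Union>Q' = \<Union>(lk K A')" "lk K A' = SP Q'"
      using Suc.IH[OF gL'] by blast
    have cQ': "card (\<Union>Q') = m * Suc i" using partn_card[OF Q'(1)] by simp
    have "\<Union>Q' \<subseteq> U" using subL' Q'(2) VU iA' V_def UV by auto
    then have UQ': "\<Union>Q' = U" using card_subset_eq[OF cUQ(2)] cQ' cUQ by simp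
    have finA': "finite A'" using A'_def finA by simp
    have FA': "insert w0 (F - {a0}) - A' \<in> lk K A'" "card (insert w0 (F - {a0}) - A') = m * i"
    proof -
      let ?F' = "insert w0 (F - {a0})"
      have F'K: "?F' \<in> K" using w0 FsK by auto
      have "(?F' - A') \<union> A' = ?F'" using A'F by blast
      then show "?F' - A' \<in> lk K A'" using F'K unfolding lk_def by auto
      have "card ?F' = Suc m * i" using w0 cFs by auto
      then show "card (?F' - A') = m * i" using card_Diff_subset[OF finA' A'F] cA' by simp
    qed
    have nbQ': "\<forall>C\<in>Q'. C \<notin> K"
      using block_nonface[OF dcK fK mf i finA' cA' Q'(3) Q'(1) FA'] by blast
    have G2L: "G2 \<in> ?L" using G2 Q(3) by simp
    then have G2K: "G2 \<union> A \<in> K" by (auto simp: lk_def)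
    have G2K': "G2 \<in> K" using dcD[OF dcK G2K] by blast
    have "G2 \<in> SP Q'"
    proof -
      have "G2 \<subseteq> \<Union>Q'" using G2 UQ' U_def by (auto simp: SP_def)
      moreover have "\<not> D \<subseteq> G2" if "D \<in> Q'" for D
        using that nbQ' dcD[OF dcK G2K'] by blast
      ultimately show ?thesis by (auto simp: SP_def)
    qed
    then have "G2 \<in> lk K A'" using Q'(3) by simp
    then show ?thesis using A'_def by (auto simp: lk_def Un_commute)
  qed
  define P where "P = insert (insert w A) Q"
  have wU: "w \<notin> U" using UV by auto
  have notin: "insert w A \<notin> Q" using wU U_def by auto
  have partP: "partn P (Suc m) i"
  proof -
    have dj: "\<forall>C\<in>Q. insert w A \<inter> C = {}" using UV U_def by auto
    have fQ: "finite Q" "card Q = m" "\<forall>B\<in>Q. finite B \<and> card B = Suc i"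
      "\<forall>B\<in>Q. \<forall>C\<in>Q. B \<noteq> C \<longrightarrow> B \<inter> C = {}" using Q(1) unfolding partn_def by auto
    have "finite P" using fQ P_def by simp
    moreover have "card P = Suc m" using fQ notin P_def by simp
    moreover have "\<forall>B\<in>P. finite B \<and> card B = Suc i" using fQ finA A(3) wA P_def by auto
    moreover have "\<forall>B\<in>P. \<forall>C\<in>P. B \<noteq> C \<longrightarrow> B \<inter> C = {}"
      unfolding P_def using fQ(4) dj by blast
    ultimately show ?thesis unfolding partn_def by blast
  qed
  have UP: "\<Union>P = V" using VU U_def P_def by auto
  have "K = SP P"
  proof
    show "K \<subseteq> SP P"
    proof
      fix G assume G: "G \<in> K"
      have "G \<subseteq> V" using G V_def by auto
      moreover have "\<not> B \<subseteq> G" if "B \<in> P" for B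
      proof
        assume "B \<subseteq> G"
        then have "B \<in> K" using dcD[OF dcK G] by blast
        then show False using that wAK nbQ P_def by auto
      qed
      ultimately show "G \<in> SP P" using UP by (auto simp: SP_def)
    qed
  next
    show "SP P \<subseteq> K"
    proof
      fix G assume G: "G \<in> SP P"
      then have GV: "G \<subseteq> V" and nb: "\<forall>B\<in>P. \<not> B \<subseteq> G" using UP by (auto simp: SP_def)
      define G2 where "G2 = G \<inter> U"
      have G2S: "G2 \<in> SP Q"
      proof -
        have "\<not> D \<subseteq> G2" if "D \<in> Q" for D using that nb P_def G2_def by auto
        then show ?thesis using G2_def U_def by (auto simp: SP_def)
      qed
      show "G \<in> K"
      proof (cases "w \<in> G")
        case False
        have "G2 \<union> A \<in> K" using G2S Q(3) by (auto simp: lk_def)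
        moreover have "G \<subseteq> G2 \<union> A" using GV VU False G2_def by auto
        ultimately show ?thesis using dcD[OF dcK] by blast
      next
        case True
        have "\<not> insert w A \<subseteq> G" using nb P_def by auto
        then obtain a0 where a0: "a0 \<in> A" "a0 \<notin> G" using True by auto
        have "insert w (A - {a0}) \<union> G2 \<in> K" using key[OF a0(1) G2S] .
        moreover have "G \<subseteq> insert w (A - {a0}) \<union> G2" using GV VU a0 G2_def by auto
        ultimately show ?thesis using dcD[OF dcK] by blast
      qed
    qed
  qed
  then show ?case using partP UP V_def by blast
qed



lemma MF_from:
  assumes dcK: "dc K" and mfc: "\<forall>F. missing_face K F \<longrightarrow> card F - 1 \<le> i"
  shows "MF K i"
  unfolding MF_def
proof (intro allI impI)
  fix X assume "finite X" "X \<notin> K"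
  then show "\<exists>M\<subseteq>X. M \<notin> K \<and> card M \<le> Suc i"
  proof (induction "card X" arbitrary: X rule: less_induct)
    case (less X)
    show ?case
    proof (cases "\<forall>G. G \<subset> X \<longrightarrow> G \<in> K")
      case True
      then have "missing_face K X" using less.prems by (simp add: missing_face_def)
      then have "card X - 1 \<le> i" using mfc by blast
      then show ?thesis using less.prems by (intro exI[of _ X]) auto
    next
      case False
      then obtain G where G: "G \<subset> X" "G \<notin> K" by blast
      have fG: "finite G" using G less.prems finite_subset psubset_imp_subset by blast
      have "card G < card X" using psubset_card_mono G less.prems by blast
      from less.hyps[OF this fG G(2)] obtain M where "M \<subseteq> G" "M \<notin> K" "card M \<le> Suc i" by blast
      then show ?thesis using G by blast
    qed
  qed
qed

lemma cycle_exchange: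
  fixes K :: "'a::linorder set set"
  assumes fin: "finite K" and c: "chain K d c" and bd: "\<forall>G\<in>K. card G = d \<longrightarrow> boundary K d c G = 0"
    and dcK: "dc K" and fK: "\<forall>F\<in>K. finite F"
    and F: "c F \<noteq> 0" and a: "a \<in> F"
  shows "\<exists>w. w \<notin> F \<and> c (insert w (F - {a})) \<noteq> 0"
proof (rule ccontr)
  assume no: "\<not> (\<exists>w. w \<notin> F \<and> c (insert w (F - {a})) \<noteq> 0)"
  have FK: "F \<in> K" "card F = d+1" using c F by (auto simp: chain_def)
  let ?G = "F - {a}"
  have GK: "?G \<in> K" using dcD[OF dcK FK(1)] by blast
  have fF: "finite F" using fK FK by auto
  have cG: "card ?G = d" using FK a fF by simp
  let ?S = "{F'\<in>K. card F' = d + 1 \<and> ?G \<subseteq> F'}"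
  have FS: "F \<in> ?S" using FK by auto
  have fS: "finite ?S" using fin by simp
  have z: "bd_sign F' ?G * c F' = 0" if "F' \<in> ?S - {F}" for F'
  proof -
    have F': "F' \<in> K" "card F' = d+1" "?G \<subseteq> F'" "F' \<noteq> F" using that by auto
    have fF': "finite F'" using fK F' by auto
    have "card (F' - ?G) = 1" using card_Diff_subset[OF _ F'(3)] fF F'(2) cG by simp
    then obtain x where x: "F' - ?G = {x}" by (auto simp: card_1_singleton_iff)
    then have F'eq: "F' = insert x ?G" using F'(3) by blast
    have "x \<noteq> a"
    proof
      assume "x = a" then have "F' = F" using F'eq a by auto
      then show False using F' by simp
    qed
    moreover have "x \<notin> ?G" using x by blast
    ultimately have "x \<notin> F" by blast
    then have "c F' = 0" using no F'eq by blast
    then show ?thesis by simp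
  qed
  have "boundary K d c ?G = bd_sign F ?G * c F + (\<Sum>F'\<in>?S - {F}. bd_sign F' ?G * c F')"
    unfolding boundary_def using sum.remove[OF fS FS] by simp
  also have "(\<Sum>F'\<in>?S - {F}. bd_sign F' ?G * c F') = 0" using z by (intro sum.neutral) blast
  finally have "boundary K d c ?G = bd_sign F ?G * c F" by simp
  moreover have "bd_sign F ?G \<noteq> 0" by (simp add: bd_sign_def)
  ultimately have "boundary K d c ?G \<noteq> 0" using F by simp
  then show False using bd GK cG by blast
qed

lemma fvec0: assumes "dc K" shows "fvec 0 K = card (\<Union>K)"
proof -
  have "{F\<in>K. card F = 0+1} = (\<lambda>x. {x}) ` \<Union>K"
  proof (rule set_eqI)
    fix F
    show "F \<in> {F\<in>K. card F = 0+1} \<longleftrightarrow> F \<in> (\<lambda>x. {x}) ` \<Union>K"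
    proof
      assume "F \<in> {F\<in>K. card F = 0+1}"
      then obtain x where "F = {x}" "F \<in> K" by (auto simp: card_1_singleton_iff)
      then show "F \<in> (\<lambda>x. {x}) ` \<Union>K" by blast
    next
      assume "F \<in> (\<lambda>x. {x}) ` \<Union>K"
      then obtain x G where "F = {x}" "x \<in> G" "G \<in> K" by blast
      then show "F \<in> {F\<in>K. card F = 0+1}" using dcD[OF assms, of G F] by auto
    qed
  qed
  then have "fvec 0 K = card ((\<lambda>x. {x}) ` \<Union>K)" by (simp add: fvec_def)
  also have "\<dots> = card (\<Union>K)" by (rule card_image) (auto simp: inj_on_def)
  finally show ?thesis .
qed

definition blk :: "nat \<Rightarrow> nat \<Rightarrow> nat set" where
  "blk i k = {k * (i + 1) ..< (k + 1) * (i + 1)}"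

lemma blk_iff: "x \<in> blk i k \<longleftrightarrow> x div (i + 1) = k"
proof
  assume "x \<in> blk i k"
  then show "x div (i + 1) = k" unfolding blk_def by (intro div_nat_eqI) (auto simp: mult.commute)
next
  assume h: "x div (i + 1) = k"
  have "(i + 1) * (x div (i + 1)) \<le> x" by (rule times_div_less_eq_dividend)
  moreover have "x < (i + 1) * Suc (x div (i + 1))"
  proof -
    have "x = (i+1)*(x div (i+1)) + x mod (i+1)" by (metis div_mult_mod_eq mult.commute)
    moreover have "x mod (i+1) < i+1" by simp
    moreover have "(i + 1) * Suc (x div (i + 1)) = (i+1) * (x div (i+1)) + (i+1)" by simp
    ultimately show ?thesis by linarith
  qed
  ultimately show "x \<in> blk i k" using h unfolding blk_def by (auto simp: mult.commute)
qed

lemma finite_blk: "finite (blk i k)" by (simp add: blk_def)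

lemma card_blk: "card (blk i k) = i + 1" by (simp add: blk_def algebra_simps)

lemma partn_blk: "partn (blk i ` {0..q}) (Suc q) i"
proof -
  have inj: "inj_on (blk i) {0..q}"
  proof (rule inj_onI)
    fix j k assume "blk i j = blk i k"
    moreover have "j * (i + 1) \<in> blk i j" by (simp add: blk_def)
    ultimately have "j * (i + 1) \<in> blk i k" by simp
    moreover have "j * (i + 1) \<in> blk i j" by (simp add: blk_def)
    ultimately show "j = k" by (simp add: blk_iff)
  qed
  show ?thesis unfolding partn_def
    using card_image[OF inj] by (auto simp: card_blk finite_blk blk_iff)
qed

lemma join_SP:
  assumes "B \<inter> \<Union>Q = {}"
  shows "join (bd_simplex B) (SP Q) = SP (insert B Q)"
proof
  show "join (bd_simplex B) (SP Q) \<subseteq> SP (insert B Q)"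
  proof
    fix X assume "X \<in> join (bd_simplex B) (SP Q)"
    then obtain F G where X: "X = F \<union> G" "F \<subset> B" "G \<subseteq> \<Union>Q" "\<forall>C\<in>Q. \<not> C \<subseteq> G"
      by (auto simp: join_def bd_simplex_def SP_def)
    have "\<not> B \<subseteq> X" using X assms by blast
    moreover have "\<not> C \<subseteq> X" if "C \<in> Q" for C
    proof
      assume "C \<subseteq> X"
      moreover have "C \<inter> B = {}" using that assms by blast
      ultimately have "C \<subseteq> G" using X by blast
      then show False using X that by blast
    qed
    ultimately show "X \<in> SP (insert B Q)" using X by (auto simp: SP_def)
  qed
next
  show "SP (insert B Q) \<subseteq> join (bd_simplex B) (SP Q)"
  proof
    fix X assume X: "X \<in> SP (insert B Q)"
    have "X \<inter> B \<in> bd_simplex B" using X by (auto simp: SP_def bd_simplex_def)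
    moreover have "X - B \<in> SP Q" using X by (auto simp: SP_def)
    moreover have "X = (X \<inter> B) \<union> (X - B)" by blast
    ultimately show "X \<in> join (bd_simplex B) (SP Q)" unfolding join_def by blast
  qed
qed

lemma foldr_SP:
  "p \<le> q \<Longrightarrow> foldr join (map (\<lambda>k. bd_simplex (blk i k)) [0..<p]) (SP (blk i ` {p..q}))
     = SP (blk i ` {0..q})"
proof (induction p)
  case 0 then show ?case by simp
next
  case (Suc p)
  have disj: "blk i p \<inter> \<Union>(blk i ` {Suc p..q}) = {}" by (auto simp: blk_iff)
  have "blk i ` {p..q} = insert (blk i p) (blk i ` {Suc p..q})" using Suc.prems
    by (metis Suc_le_lessD atLeastAtMost_insertL image_insert less_imp_le_nat)
  then have "join (bd_simplex (blk i p)) (SP (blk i ` {Suc p..q})) = SP (blk i ` {p..q})"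
    using join_SP[OF disj] by simp
  then show ?case using Suc by simp
qed

lemma bd_simplex_SP: "bd_simplex B = SP {B}"
  by (auto simp: bd_simplex_def SP_def)

lemma S_complex_SP:
  assumes "0 < i" "d mod i = i - 1"
  shows "S_complex i d = SP (blk i ` {0..d div i})"
proof -
  let ?q = "d div i"
  have e: "{?q * (i + 1) ..< ?q * (i + 1) + (d mod i + 1) + 1} = blk i ?q"
    using assms by (simp add: blk_def algebra_simps)
  have m: "(\<lambda>k. bd_simplex {k * (i + 1) ..< (k + 1) * (i + 1)}) = (\<lambda>k. bd_simplex (blk i k))"
    by (simp add: blk_def)
  have "bd_simplex (blk i ?q) = SP (blk i ` {?q..?q})" by (simp add: bd_simplex_SP)
  then show ?thesis unfolding S_complex_def Let_def e m using foldr_SP[of ?q ?q i] by simp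
qed


lemma partn_iso_aux:
  assumes "finite P0"
  shows "partn P0 n i \<Longrightarrow> partn P n i \<Longrightarrow> \<exists>\<phi>. bij_betw \<phi> (\<Union>P0) (\<Union>P) \<and> (`) \<phi> ` P0 = P"
  using assms
proof (induction P0 arbitrary: P n rule: finite_induct)
  case empty
  then have "P = {}" by (auto simp: partn_def)
  then show ?case by (simp add: bij_betw_def)
next
  case (insert B0 P0)
  have p0: "finite P0" "card (insert B0 P0) = n" "\<forall>B\<in>insert B0 P0. finite B \<and> card B = Suc i"
    "\<forall>B\<in>insert B0 P0. \<forall>C\<in>insert B0 P0. B \<noteq> C \<longrightarrow> B \<inter> C = {}"
    using insert.prems(1) by (auto simp: partn_def)
  have p: "finite P" "card P = n" "\<forall>B\<in>P. finite B \<and> card B = Suc i"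
    "\<forall>B\<in>P. \<forall>C\<in>P. B \<noteq> C \<longrightarrow> B \<inter> C = {}"
    using insert.prems(2) by (auto simp: partn_def)
  obtain n' where n: "n = Suc n'" using p0(2) insert.hyps by auto
  have cP0: "card P0 = n'" using p0(2) insert.hyps n by simp
  have "P \<noteq> {}" using p n by auto
  then obtain B where B: "B \<in> P" by blast
  have pa: "partn P0 n' i" using p0 cP0 unfolding partn_def by auto
  have pb: "partn (P - {B}) n' i" using p B n unfolding partn_def by auto
  obtain \<phi>' where \<phi>': "bij_betw \<phi>' (\<Union>P0) (\<Union>(P - {B}))" "(`) \<phi>' ` P0 = P - {B}"
    using insert.IH[OF pa pb] by blast
  have fB0: "finite B0" "card B0 = Suc i" using p0(3) by auto
  have fB: "finite B" "card B = Suc i" using p(3) B by auto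
  have "card B0 = card B" using fB0(2) fB(2) by simp
  then obtain h where h: "bij_betw h B0 B" using finite_same_card_bij[OF fB0(1) fB(1)] by blast
  define \<phi> where "\<phi> x = (if x \<in> B0 then h x else \<phi>' x)" for x
  have "B0 \<inter> C = {}" if "C \<in> P0" for C
  proof -
    have "B0 \<noteq> C" using that insert.hyps(2) by blast
    then show ?thesis using p0(4) that by blast
  qed
  then have d0: "B0 \<inter> \<Union>P0 = {}" by blast
  have d1: "B \<inter> \<Union>(P - {B}) = {}" using p(4) B by blast
  have b1: "bij_betw \<phi> B0 B" using h by (rule bij_betw_cong[THEN iffD1, rotated]) (simp add: \<phi>_def)
  have b2: "bij_betw \<phi> (\<Union>P0) (\<Union>(P - {B}))" using \<phi>'(1) d0
    by (intro bij_betw_cong[THEN iffD1, OF _ \<phi>'(1)]) (auto simp: \<phi>_def)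
  have "bij_betw \<phi> (B0 \<union> \<Union>P0) (B \<union> \<Union>(P - {B}))" by (rule bij_betw_combine[OF b1 b2 d1])
  moreover have "B \<union> \<Union>(P - {B}) = \<Union>P" using B by blast
  ultimately have bij: "bij_betw \<phi> (\<Union>(insert B0 P0)) (\<Union>P)" by simp
  have "\<phi> ` C = \<phi>' ` C" if "C \<in> P0" for C
  proof -
    have "C \<inter> B0 = {}" using that d0 by blast
    then show ?thesis by (auto simp: \<phi>_def)
  qed
  then have "(`) \<phi> ` P0 = (`) \<phi>' ` P0" by (simp cong: image_cong)
  moreover have "\<phi> ` B0 = B" using b1 by (simp add: bij_betw_def)
  ultimately have "(`) \<phi> ` insert B0 P0 = insert B (P - {B})" using \<phi>'(2) by simp
  also have "\<dots> = P" using B by blast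
  finally show ?case using bij by blast
qed

lemma partn_iso: assumes "partn P0 n i" "partn P n i"
  shows "\<exists>\<phi>. bij_betw \<phi> (\<Union>P0) (\<Union>P) \<and> (`) \<phi> ` P0 = P"
proof -
  have "finite P0" using assms(1) by (simp add: partn_def)
  then show ?thesis using partn_iso_aux[OF _ assms] by blast
qed

lemma image_SP:
  assumes bij: "bij_betw \<phi> (\<Union>P0) (\<Union>P)" and im: "(`) \<phi> ` P0 = P"
  shows "(`) \<phi> ` SP P0 = SP P"
proof -
  have inj: "inj_on \<phi> (\<Union>P0)" and su: "\<phi> ` \<Union>P0 = \<Union>P" using bij unfolding bij_betw_def by blast+
  show ?thesis
  proof
  show "(`) \<phi> ` SP P0 \<subseteq> SP P"
  proof
    fix X assume "X \<in> (`) \<phi> ` SP P0"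
    then obtain G where G: "X = \<phi> ` G" "G \<subseteq> \<Union>P0" "\<forall>B\<in>P0. \<not> B \<subseteq> G" by (auto simp: SP_def)
    have "X \<subseteq> \<Union>P" using G su by blast
    moreover have "\<not> B \<subseteq> X" if "B \<in> P" for B
    proof
      assume BX: "B \<subseteq> X"
      have "B \<in> (`) \<phi> ` P0" using that im by simp
      then obtain B0 where B0: "B0 \<in> P0" "B = \<phi> ` B0" by blast
      have "B0 \<subseteq> G"
      proof
        fix x assume x: "x \<in> B0"
        then have "\<phi> x \<in> \<phi> ` G" using BX B0 G by blast
        then show "x \<in> G" using inj_on_image_mem_iff[OF inj _ G(2)] x B0 by blast
      qed
      then show False using G B0 by blast
    qed
    ultimately show "X \<in> SP P" by (auto simp: SP_def)
  qed
next
  show "SP P \<subseteq> (`) \<phi> ` SP P0"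
  proof
    fix X assume X: "X \<in> SP P"
    define G where "G = {x\<in>\<Union>P0. \<phi> x \<in> X}"
    have XU: "X \<subseteq> \<phi> ` \<Union>P0" using X su unfolding SP_def by simp
    have XG: "X = \<phi> ` G"
    proof
      show "X \<subseteq> \<phi> ` G"
      proof
        fix x assume "x \<in> X"
        then obtain y where "y \<in> \<Union>P0" "x = \<phi> y" using XU by blast
        then show "x \<in> \<phi> ` G" using \<open>x \<in> X\<close> unfolding G_def by blast
      qed
      show "\<phi> ` G \<subseteq> X" unfolding G_def by blast
    qed
    have "G \<in> SP P0"
    proof -
      have "\<not> B0 \<subseteq> G" if "B0 \<in> P0" for B0
      proof
        assume "B0 \<subseteq> G"
        then have "\<phi> ` B0 \<subseteq> X" using XG by blast
        moreover have "\<phi> ` B0 \<in> P" using im that by blast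
        ultimately show False using X by (auto simp: SP_def)
      qed
      then show ?thesis by (auto simp: SP_def G_def)
    qed
    then show "X \<in> (`) \<phi> ` SP P0" using XG by blast
  qed
  qed
qed

theorem theorem1p1:
  fixes \<Delta> :: "'a::linorder set set" and i d :: nat
  assumes "0 < i" and "i \<le> d + 1" and "i dvd d + 1"
    and "\<Delta> \<in> C_class i d"
    and "\<forall>j. fvec j \<Delta> = fvec j (S_complex i d)"
  shows "isomorphic \<Delta> (S_complex i d)"
proof -
  have i: "0 < i" by fact
  have sc: "simplicial_complex \<Delta>" and hd: "has_dim \<Delta> d" and th: "top_reduced_homology_nonzero \<Delta> d"
    and mfc: "\<forall>F. missing_face \<Delta> F \<longrightarrow> card F - 1 \<le> i"
    using assms(4) unfolding C_class_def mem_Collect_eq by blast+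
  obtain k where dk: "d + 1 = i * k" using assms(3) by blast
  define q where "q = d div i"
  have kq: "k = Suc q" and dm: "d mod i = i - 1"
  proof -
    have k0: "k \<noteq> 0" using dk by (cases k) auto
    obtain k' where k': "k = Suc k'" using k0 by (cases k) auto
    have "d + 1 = i + i * k'" using dk k' by simp
    then have dd: "d = (i - 1) + i * k'" using i by linarith
    have dv: "d div i = k'" by (rule div_nat_eqI) (use dd i in auto)
    then show "k = Suc q" using k' q_def by simp
    have "d mod i + d div i * i = d" by (rule mod_div_mult_eq)
    then have "d mod i + i * k' = (i - 1) + i * k'" using dv dd by (simp add: mult.commute)
    then show "d mod i = i - 1" by simp
  qed
  have dq: "d + 1 = Suc q * i" using dk kq by simp
  define P0 where "P0 = blk i ` {0..q}"
  have S: "S_complex i d = SP P0" using S_complex_SP[OF i dm] q_def P0_def by simp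
  have pP0: "partn P0 (Suc q) i" using partn_blk P0_def by simp
  have dcD': "dc \<Delta>" using sc unfolding simplicial_complex_def dc_def by blast
  have finD: "finite \<Delta>" "\<forall>F\<in>\<Delta>. finite F" using sc unfolding simplicial_complex_def by blast+
  obtain c where c: "chain \<Delta> d c" "\<exists>F. c F \<noteq> 0" "\<forall>G\<in>\<Delta>. card G = d \<longrightarrow> boundary \<Delta> d c G = 0"
    using th unfolding top_reduced_homology_nonzero_def by blast
  define Fs where "Fs = {F. c F \<noteq> 0}"
  have g: "good \<Delta> Fs i (Suc q)" unfolding good_def
  proof (intro conjI)
    show "dc \<Delta>" by fact
    show "\<forall>F\<in>\<Delta>. finite F \<and> card F \<le> Suc q * i" using finD hd dq by (auto simp: has_dim_def)
    show "finite (\<Union>\<Delta>)" using finD by blast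
    have "card (\<Union>\<Delta>) = fvec 0 \<Delta>" using fvec0[OF dcD'] by simp
    also have "\<dots> = fvec 0 (SP P0)" using assms(5) S by simp
    also have "\<dots> = card (\<Union>(SP P0))" by (rule fvec0[OF dc_SP])
    also have "\<dots> = Suc q * Suc i" using Union_SP[OF pP0 i] partn_card[OF pP0] by simp
    finally show "card (\<Union>\<Delta>) \<le> Suc q * Suc i" by simp
    show "MF \<Delta> i" using MF_from[OF dcD' mfc] .
    show "Fs \<noteq> {}" using c(2) Fs_def by auto
    show "Fs \<subseteq> \<Delta>" using c(1) Fs_def by (auto simp: chain_def)
    show "\<forall>F\<in>Fs. card F = Suc q * i" using c(1) Fs_def dq by (auto simp: chain_def)
    show "\<forall>F\<in>Fs. \<forall>a\<in>F. \<exists>w. w \<notin> F \<and> insert w (F - {a}) \<in> Fs"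
    proof (intro ballI)
      fix F a assume "F \<in> Fs" "a \<in> F"
      then have "c F \<noteq> 0" using Fs_def by simp
      from cycle_exchange[OF finD(1) c(1) c(3) dcD' finD(2) this \<open>a \<in> F\<close>]
      obtain w where "w \<notin> F" "c (insert w (F - {a})) \<noteq> 0" by blast
      then show "\<exists>w. w \<notin> F \<and> insert w (F - {a}) \<in> Fs" using Fs_def by blast
    qed
  qed
  obtain P where P: "partn P (Suc q) i" "\<Union>P = \<Union>\<Delta>" "\<Delta> = SP P" using main[OF i g] by blast
  obtain \<phi> where \<phi>: "bij_betw \<phi> (\<Union>P0) (\<Union>P)" "(`) \<phi> ` P0 = P" using partn_iso[OF pP0 P(1)] by blast
  have DS: "\<Delta> = (`) \<phi> ` SP P0" using image_SP[OF \<phi>] P(3) by simp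
  define f where "f = inv_into (\<Union>P0) \<phi>"
  have inj: "inj_on \<phi> (\<Union>P0)" using \<phi>(1) by (simp add: bij_betw_def)
  have "bij_betw f (vertices \<Delta>) (vertices (S_complex i d))"
    using bij_betw_inv_into[OF \<phi>(1)] P(2) Union_SP[OF pP0 i] S unfolding f_def vertices_def by simp
  moreover have "(`) f ` \<Delta> = S_complex i d"
  proof -
    have "(`) f ` \<Delta> = (\<lambda>G. f ` \<phi> ` G) ` SP P0" using DS by (simp add: image_image)
    also have "\<dots> = (\<lambda>G. G) ` SP P0"
    proof (rule image_cong[OF refl])
      fix G assume "G \<in> SP P0"
      then have "G \<subseteq> \<Union>P0" by (auto simp: SP_def)
      then show "f ` \<phi> ` G = G" using inj f_def by simp
    qed
    finally show ?thesis using S by simp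
  qed
  ultimately show ?thesis unfolding isomorphic_def by blast
qed

end
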